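(* Let $\mathbb{R}$ be a strict Reedy category and let $G$ be a crossed $\mathbb{R}$-group compatible with the Reedy structure of $\mathbb{R}$. Then there is a unique dualizable generalized Reedy structure on the total category $\mathbb{R}G$ for which the embedding $\mathbb{R}\hookrightarrow\mathbb{R}G$ is a morphism of generalized Reedy categories.
   Context: A strict Reedy category is a small category $\mathbb{R}$ with wide subcategories $\mathbb{R}^+,\mathbb{R}^-$ and degree $d:\mathrm{Ob}(\mathbb{R})\to\mathbb{N}$ such that non-identity morphisms of $\mathbb{R}^+$ (resp. $\mathbb{R}^-$) strictly raise (resp. lower) degree and every morphism factors uniquely as a morphism of $\mathbb{R}^-$ followed by one of $\mathbb{R}^+$. A generalized Reedy structure on a small category $\mathbb{C}$: wide subcategories $\mathbb{C}^+,\mathbb{C}^-$ and degree $d$ such that (i) non-invertible morphisms of $\mathbb{C}^+$ (resp. $\mathbb{C}^-$) strictly raise (resp. lower) degree, and isomorphisms preserve degree; (ii) $\mathbb{C}^+\cap\mathbb{C}^-=\mathrm{Iso}(\mathbb{C})$; (iii) every morphism $f$ factors as $f=gh$ with $g\in\mathbb{C}^+$, $h\in\mathbb{C}^-$, uniquely up to isomorphism; (iv) if $\theta f=f$ with $\theta$ an isomorphism and $f\in\mathbb{C}^-$ then $\theta$ is an identity. It is dualizable if moreover (iv)$'$: if $f\theta=f$ with $\theta$ an isomorphism and $f\in\mathbb{C}^+$ then $\theta$ is an identity. A morphism of generalized Reedy categories is a functor preserving $(-)^+$, $(-)^-$ and degree. A crossed $\mathbb{R}$-group $G$ is a set-valued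 presheaf on $\mathbb{R}$ (action of $\alpha:s\to r$ written $\alpha^*:G_r\to G_s$) with a group structure on each $G_r$ (neutral $e_r$) and left actions $g_*$ of $G_r$ on each $\mathrm{Hom}_{\mathbb{R}}(s,r)$, satisfying for $g,h\in G_r$, $\alpha:s\to r$, $\beta:t\to s$: $g_*(\alpha\beta)=g_*(\alpha)\circ\alpha^*(g)_*(\beta)$, $g_*(1_r)=1_r$, $\alpha^*(gh)=h_*(\alpha)^*(g)\cdot\alpha^*(h)$, $\alpha^*(e_r)=e_s$. The total category $\mathbb{R}G$ has the objects of $\mathbb{R}$, morphisms $r\to s$ pairs $(\alpha,g)$ with $\alpha:r\to s$ in $\mathbb{R}$, $g\in G_r$, composition $(\alpha,g)\circ(\beta,h)=(\alpha\cdot g_*(\beta),\beta^*(g)\cdot h)$; $\mathbb{R}\hookrightarrow\mathbb{R}G$ by $\alpha\mapsto(\alpha,e)$. $G$ is compatible with the Reedy structure if (i) for $\alpha:r\to s$ in $\mathbb{R}^{\pm}$ and $g\in G_s$, $g_*(\alpha)\in\mathbb{R}^{\pm}$; (ii) if $\alpha:r\to s$ is in $\mathbb{R}^-$ and $g\in G_s$ satisfies $\alpha^*(g)=e_r$ and $g_*(\alpha)=\alpha$, then $g=e_s$. *)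

theory Defs
  imports "HOL-Algebra.Group"
begin

record ('o, 'm) cat =
  c_obj  :: "'o set"
  c_arr  :: "'m set"
  c_dom  :: "'m \<Rightarrow> 'o"
  c_cod  :: "'m \<Rightarrow> 'o"
  c_id   :: "'o \<Rightarrow> 'm"
  c_comp :: "'m \<Rightarrow> 'm \<Rightarrow> 'm"   (* c_comp C g f = g \<circ> f *)

definition is_category :: "('o, 'm, 'x) cat_scheme \<Rightarrow> bool" where
  "is_category C \<longleftrightarrow>
     (\<forall>f\<in>c_arr C. c_dom C f \<in> c_obj C \<and> c_cod C f \<in> c_obj C) \<and>
     (\<forall>x\<in>c_obj C. c_id C x \<in> c_arr C \<and> c_dom C (c_id C x) = x \<and> c_cod C (c_id C x) = x) \<and>
     (\<forall>f\<in>c_arr C. \<forall>g\<in>c_arr C. c_dom C g = c_cod C f \<longrightarrow>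
        c_comp C g f \<in> c_arr C \<and> c_dom C (c_comp C g f) = c_dom C f \<and>
        c_cod C (c_comp C g f) = c_cod C g) \<and>
     (\<forall>f\<in>c_arr C. c_comp C (c_id C (c_cod C f)) f = f \<and> c_comp C f (c_id C (c_dom C f)) = f) \<and>
     (\<forall>f\<in>c_arr C. \<forall>g\<in>c_arr C. \<forall>h\<in>c_arr C.
        c_dom C g = c_cod C f \<longrightarrow> c_dom C h = c_cod C g \<longrightarrow>
        c_comp C h (c_comp C g f) = c_comp C (c_comp C h g) f)"

definition hom :: "('o, 'm, 'x) cat_scheme \<Rightarrow> 'o \<Rightarrow> 'o \<Rightarrow> 'm set" where
  "hom C x y = {f \<in> c_arr C. c_dom C f = x \<and> c_cod C f = y}"

definition cat_iso :: "('o, 'm, 'x) cat_scheme \<Rightarrow> 'm \<Rightarrow> bool" where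
  "cat_iso C f \<longleftrightarrow> f \<in> c_arr C \<and>
     (\<exists>g\<in>c_arr C. c_dom C g = c_cod C f \<and> c_cod C g = c_dom C f \<and>
        c_comp C g f = c_id C (c_dom C f) \<and> c_comp C f g = c_id C (c_cod C f))"

definition wide_subcat :: "('o, 'm, 'x) cat_scheme \<Rightarrow> 'm set \<Rightarrow> bool" where
  "wide_subcat C S \<longleftrightarrow> S \<subseteq> c_arr C \<and> (\<forall>x\<in>c_obj C. c_id C x \<in> S) \<and>
     (\<forall>f\<in>S. \<forall>g\<in>S. c_dom C g = c_cod C f \<longrightarrow> c_comp C g f \<in> S)"

definition is_functor ::
  "('o, 'm, 'x) cat_scheme \<Rightarrow> ('p, 'n, 'y) cat_scheme \<Rightarrow> ('o \<Rightarrow> 'p) \<Rightarrow> ('m \<Rightarrow> 'n) \<Rightarrow> bool" where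
  "is_functor C D Fo Fm \<longleftrightarrow>
     (\<forall>x\<in>c_obj C. Fo x \<in> c_obj D) \<and>
     (\<forall>f\<in>c_arr C. Fm f \<in> c_arr D \<and> c_dom D (Fm f) = Fo (c_dom C f) \<and> c_cod D (Fm f) = Fo (c_cod C f)) \<and>
     (\<forall>x\<in>c_obj C. Fm (c_id C x) = c_id D (Fo x)) \<and>
     (\<forall>f\<in>c_arr C. \<forall>g\<in>c_arr C. c_dom C g = c_cod C f \<longrightarrow> Fm (c_comp C g f) = c_comp D (Fm g) (Fm f))"

text \<open>Strict Reedy category: P = R^+, M = R^-, degree d.\<close>
definition strict_reedy :: "('o, 'm, 'x) cat_scheme \<Rightarrow> 'm set \<Rightarrow> 'm set \<Rightarrow> ('o \<Rightarrow> nat) \<Rightarrow> bool" where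
  "strict_reedy C P M d \<longleftrightarrow> is_category C \<and> wide_subcat C P \<and> wide_subcat C M \<and>
     (\<forall>f\<in>P. f \<noteq> c_id C (c_dom C f) \<longrightarrow> d (c_dom C f) < d (c_cod C f)) \<and>
     (\<forall>f\<in>M. f \<noteq> c_id C (c_dom C f) \<longrightarrow> d (c_cod C f) < d (c_dom C f)) \<and>
     (\<forall>f\<in>c_arr C. \<exists>!hg. fst hg \<in> M \<and> snd hg \<in> P \<and> c_dom C (snd hg) = c_cod C (fst hg) \<and>
                          c_comp C (snd hg) (fst hg) = f)"

text \<open>Generalized Reedy structure: P = C^+, M = C^-, degree d.\<close>
definition gen_reedy :: "('o, 'm, 'x) cat_scheme \<Rightarrow> 'm set \<Rightarrow> 'm set \<Rightarrow> ('o \<Rightarrow> nat) \<Rightarrow> bool" where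
  "gen_reedy C P M d \<longleftrightarrow> is_category C \<and> wide_subcat C P \<and> wide_subcat C M \<and>
     \<comment> \<open>(i)\<close>
     (\<forall>f\<in>P. \<not> cat_iso C f \<longrightarrow> d (c_dom C f) < d (c_cod C f)) \<and>
     (\<forall>f\<in>M. \<not> cat_iso C f \<longrightarrow> d (c_cod C f) < d (c_dom C f)) \<and>
     (\<forall>f. cat_iso C f \<longrightarrow> d (c_dom C f) = d (c_cod C f)) \<and>
     \<comment> \<open>(ii)\<close>
     P \<inter> M = {f. cat_iso C f} \<and>
     \<comment> \<open>(iii) existence of factorization\<close>
     (\<forall>f\<in>c_arr C. \<exists>g h. g \<in> P \<and> h \<in> M \<and> c_dom C g = c_cod C h \<and> c_comp C g h = f) \<and>
     \<comment> \<open>(iii) uniqueness up to (a unique-compatible) isomorphism\<close>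
     (\<forall>g h g' h'. g \<in> P \<longrightarrow> h \<in> M \<longrightarrow> g' \<in> P \<longrightarrow> h' \<in> M \<longrightarrow>
        c_dom C g = c_cod C h \<longrightarrow> c_dom C g' = c_cod C h' \<longrightarrow> c_comp C g h = c_comp C g' h' \<longrightarrow>
        (\<exists>\<theta>. cat_iso C \<theta> \<and> c_dom C \<theta> = c_cod C h \<and> c_cod C \<theta> = c_cod C h' \<and>
             c_comp C \<theta> h = h' \<and> c_comp C g' \<theta> = g)) \<and>
     \<comment> \<open>(iv)\<close>
     (\<forall>\<theta> f. cat_iso C \<theta> \<longrightarrow> f \<in> M \<longrightarrow> c_dom C \<theta> = c_cod C f \<longrightarrow> c_comp C \<theta> f = f \<longrightarrow>
        \<theta> = c_id C (c_dom C \<theta>))"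

definition dualizable_gen_reedy :: "('o, 'm, 'x) cat_scheme \<Rightarrow> 'm set \<Rightarrow> 'm set \<Rightarrow> ('o \<Rightarrow> nat) \<Rightarrow> bool" where
  "dualizable_gen_reedy C P M d \<longleftrightarrow> gen_reedy C P M d \<and>
     (\<forall>\<theta> f. cat_iso C \<theta> \<longrightarrow> f \<in> P \<longrightarrow> c_cod C \<theta> = c_dom C f \<longrightarrow> c_comp C f \<theta> = f \<longrightarrow>
        \<theta> = c_id C (c_dom C \<theta>))"

definition reedy_morphism ::
  "('o, 'm, 'x) cat_scheme \<Rightarrow> 'm set \<Rightarrow> 'm set \<Rightarrow> ('o \<Rightarrow> nat) \<Rightarrow>
   ('p, 'n, 'y) cat_scheme \<Rightarrow> 'n set \<Rightarrow> 'n set \<Rightarrow> ('p \<Rightarrow> nat) \<Rightarrow>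
   ('o \<Rightarrow> 'p) \<Rightarrow> ('m \<Rightarrow> 'n) \<Rightarrow> bool" where
  "reedy_morphism C P M d D P' M' d' Fo Fm \<longleftrightarrow> is_functor C D Fo Fm \<and>
     Fm ` P \<subseteq> P' \<and> Fm ` M \<subseteq> M' \<and> (\<forall>x\<in>c_obj C. d' (Fo x) = d x)"

text \<open>G r is the group G_r; res a is a^*; act g a is g_*(a).\<close>
definition crossed_group ::
  "('o, 'm, 'x) cat_scheme \<Rightarrow> ('o \<Rightarrow> 'g monoid) \<Rightarrow> ('m \<Rightarrow> 'g \<Rightarrow> 'g) \<Rightarrow> ('g \<Rightarrow> 'm \<Rightarrow> 'm) \<Rightarrow> bool" where
  "crossed_group C G res act \<longleftrightarrow>
     (\<forall>r\<in>c_obj C. group (G r)) \<and>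
     \<comment> \<open>presheaf\<close>
     (\<forall>a\<in>c_arr C. \<forall>g\<in>carrier (G (c_cod C a)). res a g \<in> carrier (G (c_dom C a))) \<and>
     (\<forall>r\<in>c_obj C. \<forall>g\<in>carrier (G r). res (c_id C r) g = g) \<and>
     (\<forall>a\<in>c_arr C. \<forall>b\<in>c_arr C. c_dom C a = c_cod C b \<longrightarrow>
        (\<forall>g\<in>carrier (G (c_cod C a)). res (c_comp C a b) g = res b (res a g))) \<and>
     \<comment> \<open>left actions of G_r on Hom(s,r)\<close>
     (\<forall>r\<in>c_obj C. \<forall>s\<in>c_obj C.
        (\<forall>g\<in>carrier (G r). \<forall>a\<in>hom C s r. act g a \<in> hom C s r) \<and>
        (\<forall>a\<in>hom C s r. act \<one>\<^bsub>G r\<^esub> a = a) \<and>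
        (\<forall>g\<in>carrier (G r). \<forall>h\<in>carrier (G r). \<forall>a\<in>hom C s r.
           act (g \<otimes>\<^bsub>G r\<^esub> h) a = act g (act h a))) \<and>
     \<comment> \<open>crossed group axioms\<close>
     (\<forall>a\<in>c_arr C. \<forall>b\<in>c_arr C. c_dom C a = c_cod C b \<longrightarrow>
        (\<forall>g\<in>carrier (G (c_cod C a)). act g (c_comp C a b) = c_comp C (act g a) (act (res a g) b))) \<and>
     (\<forall>r\<in>c_obj C. \<forall>g\<in>carrier (G r). act g (c_id C r) = c_id C r) \<and>
     (\<forall>a\<in>c_arr C. \<forall>g\<in>carrier (G (c_cod C a)). \<forall>h\<in>carrier (G (c_cod C a)).
        res a (g \<otimes>\<^bsub>G (c_cod C a)\<^esub> h) = res (act h a) g \<otimes>\<^bsub>G (c_dom C a)\<^esub> res a h) \<and>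
     (\<forall>a\<in>c_arr C. res a \<one>\<^bsub>G (c_cod C a)\<^esub> = \<one>\<^bsub>G (c_dom C a)\<^esub>)"

definition total_cat ::
  "('o, 'm, 'x) cat_scheme \<Rightarrow> ('o \<Rightarrow> 'g monoid) \<Rightarrow> ('m \<Rightarrow> 'g \<Rightarrow> 'g) \<Rightarrow> ('g \<Rightarrow> 'm \<Rightarrow> 'm) \<Rightarrow> ('o, 'm \<times> 'g) cat" where
  "total_cat C G res act =
     \<lparr> c_obj = c_obj C,
       c_arr = {(a, g). a \<in> c_arr C \<and> g \<in> carrier (G (c_dom C a))},
       c_dom = (\<lambda>(a, g). c_dom C a),
       c_cod = (\<lambda>(a, g). c_cod C a),
       c_id = (\<lambda>r. (c_id C r, \<one>\<^bsub>G r\<^esub>)),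
       c_comp = (\<lambda>(a, g) (b, h). (c_comp C a (act g b), res b g \<otimes>\<^bsub>G (c_dom C b)\<^esub> h)) \<rparr>"

definition total_embed :: "('o, 'm, 'x) cat_scheme \<Rightarrow> ('o \<Rightarrow> 'g monoid) \<Rightarrow> 'm \<Rightarrow> 'm \<times> 'g" where
  "total_embed C G a = (a, \<one>\<^bsub>G (c_dom C a)\<^esub>)"

definition reedy_compatible ::
  "('o, 'm, 'x) cat_scheme \<Rightarrow> 'm set \<Rightarrow> 'm set \<Rightarrow>
   ('o \<Rightarrow> 'g monoid) \<Rightarrow> ('m \<Rightarrow> 'g \<Rightarrow> 'g) \<Rightarrow> ('g \<Rightarrow> 'm \<Rightarrow> 'm) \<Rightarrow> bool" where
  "reedy_compatible C P M G res act \<longleftrightarrow>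
     (\<forall>a\<in>P. \<forall>g\<in>carrier (G (c_cod C a)). act g a \<in> P) \<and>
     (\<forall>a\<in>M. \<forall>g\<in>carrier (G (c_cod C a)). act g a \<in> M) \<and>
     (\<forall>a\<in>M. \<forall>g\<in>carrier (G (c_cod C a)).
        res a g = \<one>\<^bsub>G (c_dom C a)\<^esub> \<longrightarrow> act g a = a \<longrightarrow> g = \<one>\<^bsub>G (c_cod C a)\<^esub>)"

end

theory Submission
  imports Defs
begin

locale RS =
  fixes R :: "('o, 'm) cat" and Rp Rm :: "'m set" and d :: "'o \<Rightarrow> nat"
    and G :: "'o \<Rightarrow> 'g monoid" and res :: "'m \<Rightarrow> 'g \<Rightarrow> 'g" and act :: "'g \<Rightarrow> 'm \<Rightarrow> 'm"
  assumes SR: "strict_reedy R Rp Rm d"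
    and CG: "crossed_group R G res act"
    and RC: "reedy_compatible R Rp Rm G res act"
begin

abbreviation "obj \<equiv> c_obj R"
abbreviation "arr \<equiv> c_arr R"
abbreviation "dm \<equiv> c_dom R"
abbreviation "cd \<equiv> c_cod R"
abbreviation "ide \<equiv> c_id R"
abbreviation "cmp \<equiv> c_comp R"

lemma cat: "is_category R" using SR by (simp add: strict_reedy_def)

lemma arr_dom[simp]: "f \<in> arr \<Longrightarrow> dm f \<in> obj" using cat by (simp add: is_category_def)
lemma arr_cod[simp]: "f \<in> arr \<Longrightarrow> cd f \<in> obj" using cat by (simp add: is_category_def)
lemma id_arr[simp]: "x \<in> obj \<Longrightarrow> ide x \<in> arr" using cat by (simp add: is_category_def)
lemma dom_id[simp]: "x \<in> obj \<Longrightarrow> dm (ide x) = x" using cat by (simp add: is_category_def)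
lemma cod_id[simp]: "x \<in> obj \<Longrightarrow> cd (ide x) = x" using cat by (simp add: is_category_def)
lemma comp_arr[simp]: "f \<in> arr \<Longrightarrow> g \<in> arr \<Longrightarrow> dm g = cd f \<Longrightarrow> cmp g f \<in> arr"
  using cat unfolding is_category_def by blast
lemma dom_comp[simp]: "f \<in> arr \<Longrightarrow> g \<in> arr \<Longrightarrow> dm g = cd f \<Longrightarrow> dm (cmp g f) = dm f"
  using cat unfolding is_category_def by blast
lemma cod_comp[simp]: "f \<in> arr \<Longrightarrow> g \<in> arr \<Longrightarrow> dm g = cd f \<Longrightarrow> cd (cmp g f) = cd g"
  using cat unfolding is_category_def by blast
lemma idl[simp]: "f \<in> arr \<Longrightarrow> cmp (ide (cd f)) f = f"
  using cat unfolding is_category_def by blast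
lemma idr[simp]: "f \<in> arr \<Longrightarrow> cmp f (ide (dm f)) = f"
  using cat unfolding is_category_def by blast
lemma assoc: "f \<in> arr \<Longrightarrow> g \<in> arr \<Longrightarrow> h \<in> arr \<Longrightarrow> dm g = cd f \<Longrightarrow> dm h = cd g \<Longrightarrow>
    cmp h (cmp g f) = cmp (cmp h g) f"
  using cat unfolding is_category_def by blast

lemma Rp_arr: "f \<in> Rp \<Longrightarrow> f \<in> arr" using SR by (auto simp: strict_reedy_def wide_subcat_def)
lemma Rm_arr: "f \<in> Rm \<Longrightarrow> f \<in> arr" using SR by (auto simp: strict_reedy_def wide_subcat_def)
lemma Rp_id: "x \<in> obj \<Longrightarrow> ide x \<in> Rp" using SR by (auto simp: strict_reedy_def wide_subcat_def)
lemma Rm_id: "x \<in> obj \<Longrightarrow> ide x \<in> Rm" using SR by (auto simp: strict_reedy_def wide_subcat_def)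
lemma Rp_comp: "f \<in> Rp \<Longrightarrow> g \<in> Rp \<Longrightarrow> dm g = cd f \<Longrightarrow> cmp g f \<in> Rp"
  using SR by (auto simp: strict_reedy_def wide_subcat_def)
lemma Rm_comp: "f \<in> Rm \<Longrightarrow> g \<in> Rm \<Longrightarrow> dm g = cd f \<Longrightarrow> cmp g f \<in> Rm"
  using SR by (auto simp: strict_reedy_def wide_subcat_def)
lemma Rp_deg: "f \<in> Rp \<Longrightarrow> f \<noteq> ide (dm f) \<Longrightarrow> d (dm f) < d (cd f)"
  using SR by (auto simp: strict_reedy_def)
lemma Rm_deg: "f \<in> Rm \<Longrightarrow> f \<noteq> ide (dm f) \<Longrightarrow> d (cd f) < d (dm f)"
  using SR by (auto simp: strict_reedy_def)
lemma fact_ex: "f \<in> arr \<Longrightarrow> \<exists>m p. m \<in> Rm \<and> p \<in> Rp \<and> dm p = cd m \<and> cmp p m = f"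
  using SR unfolding strict_reedy_def by (metis fst_conv snd_conv)
lemma fact_uniq: "m \<in> Rm \<Longrightarrow> p \<in> Rp \<Longrightarrow> dm p = cd m \<Longrightarrow>
   m' \<in> Rm \<Longrightarrow> p' \<in> Rp \<Longrightarrow> dm p' = cd m' \<Longrightarrow> cmp p m = cmp p' m' \<Longrightarrow> m = m' \<and> p = p'"
proof -
  assume a: "m \<in> Rm" "p \<in> Rp" "dm p = cd m" "m' \<in> Rm" "p' \<in> Rp" "dm p' = cd m'" "cmp p m = cmp p' m'"
  have "cmp p m \<in> arr" using a Rm_arr Rp_arr by simp
  then have "\<exists>!hg. fst hg \<in> Rm \<and> snd hg \<in> Rp \<and> dm (snd hg) = cd (fst hg) \<and> cmp (snd hg) (fst hg) = cmp p m"
    using SR unfolding strict_reedy_def by blast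
  then have "(m,p) = (m',p')" using a by (metis (no_types, lifting) fst_conv snd_conv)
  then show ?thesis by simp
qed

lemma grp: "r \<in> obj \<Longrightarrow> group (G r)" using CG by (simp add: crossed_group_def)
lemma res_closed: "a \<in> arr \<Longrightarrow> g \<in> carrier (G (cd a)) \<Longrightarrow> res a g \<in> carrier (G (dm a))"
  using CG by (simp add: crossed_group_def)
lemma res_id: "r \<in> obj \<Longrightarrow> g \<in> carrier (G r) \<Longrightarrow> res (ide r) g = g"
  using CG by (simp add: crossed_group_def)
lemma res_comp: "a \<in> arr \<Longrightarrow> b \<in> arr \<Longrightarrow> dm a = cd b \<Longrightarrow> g \<in> carrier (G (cd a)) \<Longrightarrow>
   res (cmp a b) g = res b (res a g)"
  using CG by (simp add: crossed_group_def)
lemma act_ax: "r \<in> obj \<Longrightarrow> s \<in> obj \<Longrightarrow>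
        (\<forall>g\<in>carrier (G r). \<forall>a\<in>Defs.hom R s r. act g a \<in> Defs.hom R s r) \<and>
        (\<forall>a\<in>Defs.hom R s r. act \<one>\<^bsub>G r\<^esub> a = a) \<and>
        (\<forall>g\<in>carrier (G r). \<forall>h\<in>carrier (G r). \<forall>a\<in>Defs.hom R s r.
           act (g \<otimes>\<^bsub>G r\<^esub> h) a = act g (act h a))"
  using CG unfolding crossed_group_def by blast
lemma act_arr: "a \<in> arr \<Longrightarrow> g \<in> carrier (G (cd a)) \<Longrightarrow> act g a \<in> arr \<and> dm (act g a) = dm a \<and> cd (act g a) = cd a"
proof -
  assume a: "a \<in> arr" "g \<in> carrier (G (cd a))"
  have h: "a \<in> Defs.hom R (dm a) (cd a)" using a by (simp add: hom_def)
  have "act g a \<in> Defs.hom R (dm a) (cd a)" using act_ax[of "cd a" "dm a"] a h by simp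
  then show ?thesis by (simp add: hom_def)
qed
lemma act_one: "a \<in> arr \<Longrightarrow> act \<one>\<^bsub>G (cd a)\<^esub> a = a"
proof -
  assume a: "a \<in> arr"
  have "a \<in> Defs.hom R (dm a) (cd a)" using a by (simp add: hom_def)
  then show ?thesis using act_ax[of "cd a" "dm a"] a by simp
qed
lemma act_mult: "a \<in> arr \<Longrightarrow> g \<in> carrier (G (cd a)) \<Longrightarrow> h \<in> carrier (G (cd a)) \<Longrightarrow>
   act (g \<otimes>\<^bsub>G (cd a)\<^esub> h) a = act g (act h a)"
proof -
  assume a: "a \<in> arr" "g \<in> carrier (G (cd a))" "h \<in> carrier (G (cd a))"
  have "a \<in> Defs.hom R (dm a) (cd a)" using a by (simp add: hom_def)
  then show ?thesis using act_ax[of "cd a" "dm a"] a by simp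
qed
lemma act_comp: "a \<in> arr \<Longrightarrow> b \<in> arr \<Longrightarrow> dm a = cd b \<Longrightarrow> g \<in> carrier (G (cd a)) \<Longrightarrow>
   act g (cmp a b) = cmp (act g a) (act (res a g) b)"
  using CG by (simp add: crossed_group_def)
lemma act_id: "r \<in> obj \<Longrightarrow> g \<in> carrier (G r) \<Longrightarrow> act g (ide r) = ide r"
  using CG by (simp add: crossed_group_def)
lemma res_mult: "a \<in> arr \<Longrightarrow> g \<in> carrier (G (cd a)) \<Longrightarrow> h \<in> carrier (G (cd a)) \<Longrightarrow>
   res a (g \<otimes>\<^bsub>G (cd a)\<^esub> h) = res (act h a) g \<otimes>\<^bsub>G (dm a)\<^esub> res a h"
  using CG by (simp add: crossed_group_def)
lemma res_one: "a \<in> arr \<Longrightarrow> res a \<one>\<^bsub>G (cd a)\<^esub> = \<one>\<^bsub>G (dm a)\<^esub>"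
  using CG by (simp add: crossed_group_def)
lemma actP: "a \<in> Rp \<Longrightarrow> g \<in> carrier (G (cd a)) \<Longrightarrow> act g a \<in> Rp"
  using RC by (simp add: reedy_compatible_def)
lemma actM: "a \<in> Rm \<Longrightarrow> g \<in> carrier (G (cd a)) \<Longrightarrow> act g a \<in> Rm"
  using RC by (simp add: reedy_compatible_def)
lemma compatM: "a \<in> Rm \<Longrightarrow> g \<in> carrier (G (cd a)) \<Longrightarrow> res a g = \<one>\<^bsub>G (dm a)\<^esub> \<Longrightarrow> act g a = a \<Longrightarrow> g = \<one>\<^bsub>G (cd a)\<^esub>"
  using RC by (simp add: reedy_compatible_def)


abbreviation "T \<equiv> total_cat R G res act"

lemma T_obj[simp]: "c_obj T = obj" by (simp add: total_cat_def)
lemma T_arr[simp]: "(a,g) \<in> c_arr T \<longleftrightarrow> a \<in> arr \<and> g \<in> carrier (G (dm a))" by (simp add: total_cat_def)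
lemma T_dom[simp]: "c_dom T (a,g) = dm a" by (simp add: total_cat_def)
lemma T_cod[simp]: "c_cod T (a,g) = cd a" by (simp add: total_cat_def)
lemma T_id[simp]: "c_id T r = (ide r, \<one>\<^bsub>G r\<^esub>)" by (simp add: total_cat_def)
lemma T_comp[simp]: "c_comp T (a,g) (b,h) = (cmp a (act g b), res b g \<otimes>\<^bsub>G (dm b)\<^esub> h)" by (simp add: total_cat_def)

lemma T_comp_arr:
  assumes "a \<in> arr" "g \<in> carrier (G (dm a))" "b \<in> arr" "h \<in> carrier (G (dm b))" "dm a = cd b"
  shows "cmp a (act g b) \<in> arr \<and> res b g \<otimes>\<^bsub>G (dm b)\<^esub> h \<in> carrier (G (dm b)) \<and>
         dm (cmp a (act g b)) = dm b \<and> cd (cmp a (act g b)) = cd a"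
proof -
  interpret gb: group "G (dm b)" using grp assms by simp
  have ab: "act g b \<in> arr \<and> dm (act g b) = dm b \<and> cd (act g b) = cd b" using act_arr assms by simp
  have "res b g \<in> carrier (G (dm b))" using res_closed assms by simp
  then show ?thesis using ab assms by simp
qed

lemma T_cat: "is_category T"
proof -
  have A: "\<forall>f\<in>c_arr T. c_dom T f \<in> c_obj T \<and> c_cod T f \<in> c_obj T" by auto
  have B: "\<forall>x\<in>c_obj T. c_id T x \<in> c_arr T \<and> c_dom T (c_id T x) = x \<and> c_cod T (c_id T x) = x"
    using grp by (auto intro: monoid.one_closed group.is_monoid)
  have C: "\<forall>f\<in>c_arr T. \<forall>g\<in>c_arr T. c_dom T g = c_cod T f \<longrightarrow>
        c_comp T g f \<in> c_arr T \<and> c_dom T (c_comp T g f) = c_dom T f \<and>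
        c_cod T (c_comp T g f) = c_cod T g"
    using T_comp_arr by auto
  have D: "\<forall>f\<in>c_arr T. c_comp T (c_id T (c_cod T f)) f = f \<and> c_comp T f (c_id T (c_dom T f)) = f"
  proof
    fix f assume f: "f \<in> c_arr T"
    obtain a g where fe: "f = (a,g)" by force
    have a: "a \<in> arr" "g \<in> carrier (G (dm a))" using f fe by auto
    interpret ga: group "G (dm a)" using grp a by simp
    have 1: "act \<one>\<^bsub>G (cd a)\<^esub> a = a" using act_one a by simp
    have 2: "res a \<one>\<^bsub>G (cd a)\<^esub> = \<one>\<^bsub>G (dm a)\<^esub>" using res_one a by simp
    have 3: "act g (ide (dm a)) = ide (dm a)" using act_id a by simp
    have 4: "res (ide (dm a)) g = g" using res_id a by simp
    show "c_comp T (c_id T (c_cod T f)) f = f \<and> c_comp T f (c_id T (c_dom T f)) = f"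
      using 1 2 3 4 a fe by simp
  qed
  have E: "\<forall>f\<in>c_arr T. \<forall>g\<in>c_arr T. \<forall>h\<in>c_arr T.
        c_dom T g = c_cod T f \<longrightarrow> c_dom T h = c_cod T g \<longrightarrow>
        c_comp T h (c_comp T g f) = c_comp T (c_comp T h g) f"
  proof (intro ballI impI)
    fix f g h assume f: "f \<in> c_arr T" and g: "g \<in> c_arr T" and h: "h \<in> c_arr T"
      and fg: "c_dom T g = c_cod T f" and gh: "c_dom T h = c_cod T g"
    obtain c k where fe: "f = (c,k)" by force
    obtain b y where ge: "g = (b,y)" by force
    obtain a x where he: "h = (a,x)" by force
    have c: "c \<in> arr" "k \<in> carrier (G (dm c))" using f fe by auto
    have b: "b \<in> arr" "y \<in> carrier (G (dm b))" using g ge by auto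
    have a: "a \<in> arr" "x \<in> carrier (G (dm a))" using h he by auto
    have bc: "dm b = cd c" using fg fe ge by simp
    have ab: "dm a = cd b" using gh ge he by simp
    interpret gb: group "G (dm b)" using grp b by simp
    interpret gc: group "G (dm c)" using grp c by simp
    have rbx: "res b x \<in> carrier (G (dm b))" using res_closed a b ab by simp
    have axb: "act x b \<in> arr \<and> dm (act x b) = dm b \<and> cd (act x b) = cd b" using act_arr a b ab by simp
    have ayc: "act y c \<in> arr \<and> dm (act y c) = dm c \<and> cd (act y c) = cd c" using act_arr b c bc by simp
    have rcy: "res c y \<in> carrier (G (dm c))" using res_closed b c bc by simp
    have rcrbx: "res (act y c) (res b x) \<in> carrier (G (dm c))" using res_closed[of "act y c" "res b x"] ayc rbx bc by simp
    have e1: "act x (cmp b (act y c)) = cmp (act x b) (act (res b x \<otimes>\<^bsub>G (dm b)\<^esub> y) c)"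
    proof -
      have "act x (cmp b (act y c)) = cmp (act x b) (act (res b x) (act y c))"
        using act_comp[of b "act y c" x] a b ab ayc bc by simp
      also have "act (res b x) (act y c) = act (res b x \<otimes>\<^bsub>G (dm b)\<^esub> y) c"
        using act_mult[of c "res b x" y] c rbx b bc by simp
      finally show ?thesis .
    qed
    have e2: "res (cmp b (act y c)) x = res (act y c) (res b x)"
      using res_comp[of b "act y c" x] a b ab ayc bc by simp
    have e3: "res c (res b x \<otimes>\<^bsub>G (dm b)\<^esub> y) = res (act y c) (res b x) \<otimes>\<^bsub>G (dm c)\<^esub> res c y"
      using res_mult[of c "res b x" y] c rbx b bc by simp
    have e4: "cmp a (cmp (act x b) (act (res b x \<otimes>\<^bsub>G (dm b)\<^esub> y) c)) =
              cmp (cmp a (act x b)) (act (res b x \<otimes>\<^bsub>G (dm b)\<^esub> y) c)"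
    proof -
      have "act (res b x \<otimes>\<^bsub>G (dm b)\<^esub> y) c \<in> arr \<and> cd (act (res b x \<otimes>\<^bsub>G (dm b)\<^esub> y) c) = cd c"
        using act_arr[of c "res b x \<otimes>\<^bsub>G (dm b)\<^esub> y"] c gb.m_closed[OF rbx b(2)] bc by simp
      then show ?thesis using assoc axb a ab bc by simp
    qed
    have e5: "dm (cmp b (act y c)) = dm c" using ayc b bc by simp
    show "c_comp T h (c_comp T g f) = c_comp T (c_comp T h g) f"
      using fe ge he e1 e2 e3 e4 e5 ayc axb rcrbx rcy c by (simp add: gc.m_assoc)
  qed
  show ?thesis unfolding is_category_def using A B C D E by blast
qed


lemma retr_gen:
  fixes e :: "'o \<Rightarrow> int"
  assumes p: "p \<in> arr" and q: "q \<in> arr" and pq: "dm p = cd q" and c: "cmp p q = ide (cd p)"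
    and ep: "p \<noteq> ide (dm p) \<Longrightarrow> e (dm p) < e (cd p)"
    and eq: "q \<noteq> ide (dm q) \<Longrightarrow> e (dm q) < e (cd q)"
  shows "p = ide (dm p) \<and> q = ide (dm q)"
proof -
  have dq: "dm q = cd p" using dom_comp[OF q p pq] c p by simp
  show ?thesis
  proof (cases "q = ide (dm q)")
    case True
    then have "cd q = dm q" using q by (metis arr_dom cod_id)
    then have "cmp p q = p" using True pq idr[OF p] by simp
    then show ?thesis using True c pq dq \<open>cd q = dm q\<close> by simp
  next
    case False
    then have "e (cd p) < e (dm p)" using eq dq pq by simp
    then have pi: "p = ide (dm p)" using ep by fastforce
    then have "cmp p q = q" using pq idl[OF q] by simp
    then have "q = ide (dm q)" using c dq by simp
    then show ?thesis using False by simp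
  qed
qed

lemma split_inv:
  assumes a: "a \<in> arr" and b: "b \<in> arr" and ab: "dm a = cd b" and c: "cmp a b = ide (cd a)"
  shows "a \<in> Rm \<and> b \<in> Rp"
proof -
  obtain m p where mp: "m \<in> Rm" "p \<in> Rp" "dm p = cd m" "cmp p m = a" using fact_ex[OF a] by blast
  obtain m' p' where mp': "m' \<in> Rm" "p' \<in> Rp" "dm p' = cd m'" "cmp p' m' = b" using fact_ex[OF b] by blast
  have ar: "m \<in> arr" "p \<in> arr" "m' \<in> arr" "p' \<in> arr" using mp mp' Rm_arr Rp_arr by auto
  have dma: "dm a = dm m" using mp ar by auto
  have cdb: "cd b = cd p'" using mp' ar by auto
  have mp'c: "dm m = cd p'" using dma cdb ab by simp
  obtain m'' p'' where mp'': "m'' \<in> Rm" "p'' \<in> Rp" "dm p'' = cd m''" "cmp p'' m'' = cmp m p'"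
    using fact_ex[of "cmp m p'"] ar mp'c by auto
  have ar'': "m'' \<in> arr" "p'' \<in> arr" using mp'' Rm_arr Rp_arr by auto
  have d1: "dm m'' = dm p'" and c1: "cd p'' = cd m"
    using mp'' ar ar'' mp'c by (metis dom_comp, metis cod_comp)
  have pm'ar: "cmp p' m' \<in> arr" "cd (cmp p' m') = cd p'" using ar mp' by auto
  have "cmp a b = cmp (cmp p m) (cmp p' m')" using mp mp' by simp
  also have "\<dots> = cmp p (cmp m (cmp p' m'))" using assoc[of "cmp p' m'" m p] ar mp pm'ar mp'c by simp
  also have "\<dots> = cmp p (cmp (cmp m p') m')" using assoc[of m' p' m] ar mp'(3) mp'c by simp
  also have "\<dots> = cmp p (cmp (cmp p'' m'') m')" using mp'' by simp
  also have "\<dots> = cmp p (cmp p'' (cmp m'' m'))" using assoc[of m' m'' p''] ar ar'' mp'(3) mp''(3) d1 by simp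
  also have "\<dots> = cmp (cmp p p'') (cmp m'' m')" using assoc[of "cmp m'' m'" p'' p] ar ar'' mp(3) mp''(3) mp'(3) d1 c1 by simp
  finally have e0: "cmp (cmp p p'') (cmp m'' m') = ide (cd a)" using c by simp
  have o: "cd a \<in> obj" using a by simp
  have "cmp (ide (cd a)) (ide (cd a)) = ide (cd a)" using idl[of "ide (cd a)"] o by simp
  then have e: "cmp (cmp p p'') (cmp m'' m') = cmp (ide (cd a)) (ide (cd a))" using e0 by simp
  have d1': "dm m'' = cd m'" using d1 mp'(3) by simp
  have c1': "dm p = cd p''" using c1 mp(3) by simp
  have r1: "cmp m'' m' \<in> Rm" by (rule Rm_comp[OF mp'(1) mp''(1) d1'])
  have r2: "cmp p p'' \<in> Rp" by (rule Rp_comp[OF mp''(2) mp(2) c1'])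
  have r3: "dm (cmp p p'') = cd (cmp m'' m')"
  proof -
    have "dm (cmp p p'') = dm p''" using ar ar'' mp c1 by simp
    moreover have "cd (cmp m'' m') = cd m''" using ar ar'' d1 mp'(3) by simp
    ultimately show ?thesis using mp'' by simp
  qed
  have r4: "dm (ide (cd a)) = cd (ide (cd a))" using o by simp
  have u: "cmp m'' m' = ide (cd a) \<and> cmp p p'' = ide (cd a)"
    using fact_uniq[OF r1 r2 r3 Rm_id[OF o] Rp_id[OF o] r4 e] by simp
  have cpa: "cd p = cd a" using mp(4) ar(1,2) mp(3) by auto
  have "p = ide (dm p) \<and> p'' = ide (dm p'')"
  proof (rule retr_gen[of p p'' "\<lambda>x. int (d x)"])
    show "p \<in> arr" "p'' \<in> arr" "dm p = cd p''" by (fact ar, fact ar'', fact c1')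
    show "cmp p p'' = ide (cd p)" using u cpa by simp
    show "p \<noteq> ide (dm p) \<Longrightarrow> int (d (dm p)) < int (d (cd p))" using Rp_deg mp(2) by simp
    show "p'' \<noteq> ide (dm p'') \<Longrightarrow> int (d (dm p'')) < int (d (cd p''))" using Rp_deg mp''(2) by simp
  qed
  then have "p = ide (cd m)" using mp(3) by simp
  then have A: "a \<in> Rm" using mp(1,4) idl[OF ar(1)] by simp
  have cm: "cd m'' = cd a"
  proof -
    have "cd (cmp m'' m') = cd m''" using ar ar'' d1' by simp
    then show ?thesis using u o by simp
  qed
  have "m'' = ide (dm m'') \<and> m' = ide (dm m')"
  proof (rule retr_gen[of m'' m' "\<lambda>x. - int (d x)"])
    show "m'' \<in> arr" "m' \<in> arr" "dm m'' = cd m'" by (fact ar'', fact ar, fact d1')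
    show "cmp m'' m' = ide (cd m'')" using u cm by simp
    show "m'' \<noteq> ide (dm m'') \<Longrightarrow> - int (d (dm m'')) < - int (d (cd m''))" using Rm_deg mp''(1) by fastforce
    show "m' \<noteq> ide (dm m') \<Longrightarrow> - int (d (dm m')) < - int (d (cd m'))" using Rm_deg mp'(1) by fastforce
  qed
  then have mi: "m' = ide (dm m')" by simp
  then have "cd m' = dm m'" using ar(3) by (metis arr_dom cod_id)
  then have "m' = ide (dm p')" using mi mp'(3) by simp
  then have B: "b \<in> Rp" using mp'(2,4) idr[OF ar(4)] by simp
  show ?thesis using A B by simp
qed


lemma T_iso_fwd:
  assumes "cat_iso T (a,g)"
  shows "a \<in> arr \<and> a = ide (dm a) \<and> g \<in> carrier (G (dm a))"
proof -
  from assms obtain f where f: "f \<in> c_arr T" "c_dom T f = cd a" "c_cod T f = dm a"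
    "c_comp T f (a,g) = c_id T (dm a)" "c_comp T (a,g) f = c_id T (cd a)"
    and ag: "a \<in> arr" "g \<in> carrier (G (dm a))"
    unfolding cat_iso_def by auto
  obtain b h where fe: "f = (b,h)" by force
  have b: "b \<in> arr" "h \<in> carrier (G (dm b))" "dm b = cd a" "cd b = dm a" using f fe by auto
  have gb: "act g b \<in> arr \<and> dm (act g b) = dm b \<and> cd (act g b) = cd b" using act_arr b ag by simp
  have ha: "act h a \<in> arr \<and> dm (act h a) = dm a \<and> cd (act h a) = cd a" using act_arr b ag by simp
  have c1: "cmp a (act g b) = ide (cd a)" using f(5) fe by simp
  have c2: "cmp b (act h a) = ide (cd b)" using f(4) fe b by simp
  have aM: "a \<in> Rm" using split_inv[of a "act g b"] ag gb b c1 by simp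
  have haP: "act h a \<in> Rp" using split_inv[of b "act h a"] ha b c2 by simp
  have "a = ide (dm a)"
  proof (rule ccontr)
    assume n: "a \<noteq> ide (dm a)"
    then have lt: "d (cd a) < d (dm a)" using Rm_deg aM by simp
    then have "dm a \<noteq> cd a" by auto
    then have "act h a \<noteq> ide (dm (act h a))" using ha ag by (metis arr_dom cod_id)
    then have "d (dm a) < d (cd a)" using Rp_deg[OF haP] ha by simp
    then show False using lt by simp
  qed
  then show ?thesis using ag by simp
qed

lemma id_id[simp]: "r \<in> obj \<Longrightarrow> cmp (ide r) (ide r) = ide r"
  using idl[of "ide r"] by simp

lemma T_iso_bwd:
  assumes "r \<in> obj" "g \<in> carrier (G r)"
  shows "cat_iso T (ide r, g)"
proof -
  interpret gr: group "G r" using grp assms by simp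
  have ig: "inv\<^bsub>G r\<^esub> g \<in> carrier (G r)" using assms by simp
  show ?thesis unfolding cat_iso_def
    apply (rule conjI)
    using assms apply simp
    apply (rule bexI[of _ "(ide r, inv\<^bsub>G r\<^esub> g)"])
    using assms ig act_id res_id by auto
qed

lemma T_iso: "cat_iso T (a,g) \<longleftrightarrow> a \<in> arr \<and> a = ide (dm a) \<and> g \<in> carrier (G (dm a))"
  using T_iso_fwd T_iso_bwd by (metis arr_dom)


lemma T_uniq:
  assumes g: "\<gamma> \<in> Rp" "x \<in> carrier (G (dm \<gamma>))" and e: "\<eta> \<in> Rm" "y \<in> carrier (G (dm \<eta>))"
    and g': "\<gamma>' \<in> Rp" "x' \<in> carrier (G (dm \<gamma>'))" and e': "\<eta>' \<in> Rm" "y' \<in> carrier (G (dm \<eta>'))"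
    and ge: "dm \<gamma> = cd \<eta>" and ge': "dm \<gamma>' = cd \<eta>'"
    and eq: "c_comp T (\<gamma>,x) (\<eta>,y) = c_comp T (\<gamma>',x') (\<eta>',y')"
  shows "\<exists>\<theta>. cat_iso T \<theta> \<and> c_dom T \<theta> = cd \<eta> \<and> c_cod T \<theta> = cd \<eta>' \<and>
             c_comp T \<theta> (\<eta>,y) = (\<eta>',y') \<and> c_comp T (\<gamma>',x') \<theta> = (\<gamma>,x)"
proof -
  have ar: "\<gamma> \<in> arr" "\<eta> \<in> arr" "\<gamma>' \<in> arr" "\<eta>' \<in> arr" using g e g' e' Rp_arr Rm_arr by auto
  define s where "s = cd \<eta>"
  have so: "s \<in> obj" using ar s_def by simp
  have xs: "x \<in> carrier (G (cd \<eta>))" using g ge by simp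
  have xs': "x' \<in> carrier (G (cd \<eta>'))" using g' ge' by simp
  have xe: "act x \<eta> \<in> Rm" using actM e xs by simp
  have xe': "act x' \<eta>' \<in> Rm" using actM e' xs' by simp
  have xea: "act x \<eta> \<in> arr \<and> dm (act x \<eta>) = dm \<eta> \<and> cd (act x \<eta>) = cd \<eta>" using act_arr ar xs by simp
  have xea': "act x' \<eta>' \<in> arr \<and> dm (act x' \<eta>') = dm \<eta>' \<and> cd (act x' \<eta>') = cd \<eta>'" using act_arr ar xs' by simp
  have eq1: "cmp \<gamma> (act x \<eta>) = cmp \<gamma>' (act x' \<eta>')" and
       eq2: "res \<eta> x \<otimes>\<^bsub>G (dm \<eta>)\<^esub> y = res \<eta>' x' \<otimes>\<^bsub>G (dm \<eta>')\<^esub> y'" using eq by auto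
  have u: "act x \<eta> = act x' \<eta>' \<and> \<gamma> = \<gamma>'"
    using fact_uniq[OF xe g(1) _ xe' g'(1) _ eq1] xea xea' ge ge' by simp
  have cdeq: "cd \<eta>' = s" using u xea xea' s_def by metis
  have dmeq: "dm \<eta>' = dm \<eta>" using u xea xea' by metis
  interpret gs: group "G s" using grp so by simp
  interpret gd: group "G (dm \<eta>)" using grp ar by simp
  have xS: "x \<in> carrier (G s)" using xs s_def by simp
  have xS': "x' \<in> carrier (G s)" using xs' cdeq by simp
  define k where "k = inv\<^bsub>G s\<^esub> x' \<otimes>\<^bsub>G s\<^esub> x"
  have kS: "k \<in> carrier (G s)" using k_def xS xS' by simp
  have ixS: "inv\<^bsub>G s\<^esub> x' \<in> carrier (G s)" using xS' by simp
  have act_k: "act k \<eta> = \<eta>'"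
  proof -
    have "act k \<eta> = act (inv\<^bsub>G s\<^esub> x') (act x \<eta>)" using act_mult[of \<eta> "inv\<^bsub>G s\<^esub> x'" x] ar ixS xS k_def s_def by simp
    also have "\<dots> = act (inv\<^bsub>G s\<^esub> x') (act x' \<eta>')" using u by simp
    also have "\<dots> = act (inv\<^bsub>G s\<^esub> x' \<otimes>\<^bsub>G s\<^esub> x') \<eta>'" using act_mult[of \<eta>' "inv\<^bsub>G s\<^esub> x'" x'] ar ixS xS' cdeq by simp
    also have "\<dots> = \<eta>'" using act_one[of \<eta>'] ar xS' cdeq by simp
    finally show ?thesis .
  qed
  have rx: "res \<eta> x \<in> carrier (G (dm \<eta>))" using res_closed ar xs by simp
  have rx': "res \<eta>' x' \<in> carrier (G (dm \<eta>))" using res_closed ar xs' dmeq by metis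
  have ri: "res (act x' \<eta>') (inv\<^bsub>G s\<^esub> x') \<in> carrier (G (dm \<eta>))"
    using res_closed[of "act x' \<eta>'" "inv\<^bsub>G s\<^esub> x'"] xea' ixS cdeq dmeq by simp
  have inv1: "res (act x' \<eta>') (inv\<^bsub>G s\<^esub> x') = inv\<^bsub>G (dm \<eta>)\<^esub> (res \<eta>' x')"
  proof -
    have "res \<eta>' (inv\<^bsub>G s\<^esub> x' \<otimes>\<^bsub>G s\<^esub> x') = res (act x' \<eta>') (inv\<^bsub>G s\<^esub> x') \<otimes>\<^bsub>G (dm \<eta>)\<^esub> res \<eta>' x'"
      using res_mult[of \<eta>' "inv\<^bsub>G s\<^esub> x'" x'] ar ixS xS' cdeq dmeq by simp
    moreover have "res \<eta>' (inv\<^bsub>G s\<^esub> x' \<otimes>\<^bsub>G s\<^esub> x') = \<one>\<^bsub>G (dm \<eta>)\<^esub>"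
      using res_one[of \<eta>'] ar xS' cdeq dmeq by simp
    ultimately show ?thesis using gd.inv_equality rx' ri by metis
  qed
  have res_k: "res \<eta> k \<otimes>\<^bsub>G (dm \<eta>)\<^esub> y = y'"
  proof -
    have "res \<eta> k = res (act x \<eta>) (inv\<^bsub>G s\<^esub> x') \<otimes>\<^bsub>G (dm \<eta>)\<^esub> res \<eta> x"
      using res_mult[of \<eta> "inv\<^bsub>G s\<^esub> x'" x] ar ixS xS k_def s_def by simp
    also have "\<dots> = inv\<^bsub>G (dm \<eta>)\<^esub> (res \<eta>' x') \<otimes>\<^bsub>G (dm \<eta>)\<^esub> res \<eta> x" using u inv1 by simp
    finally have "res \<eta> k \<otimes>\<^bsub>G (dm \<eta>)\<^esub> y = inv\<^bsub>G (dm \<eta>)\<^esub> (res \<eta>' x') \<otimes>\<^bsub>G (dm \<eta>)\<^esub> (res \<eta> x \<otimes>\<^bsub>G (dm \<eta>)\<^esub> y)"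
      using rx rx' e(2) by (simp add: gd.m_assoc)
    also have "\<dots> = inv\<^bsub>G (dm \<eta>)\<^esub> (res \<eta>' x') \<otimes>\<^bsub>G (dm \<eta>)\<^esub> (res \<eta>' x' \<otimes>\<^bsub>G (dm \<eta>)\<^esub> y')"
      using eq2 dmeq by simp
    also have "\<dots> = y'" using rx' e'(2) dmeq by (simp add: gd.m_assoc[symmetric])
    finally show ?thesis .
  qed
  have i1: "cat_iso T (ide s, k)" using T_iso_bwd so kS by simp
  have c1: "c_comp T (ide s, k) (\<eta>,y) = (\<eta>',y')"
    using act_k res_k idl[of \<eta>'] ar cdeq by simp
  have c2: "c_comp T (\<gamma>',x') (ide s, k) = (\<gamma>,x)"
  proof -
    have "act x' (ide s) = ide s" using act_id so xS' by simp
    moreover have "res (ide s) x' = x'" using res_id so xS' by simp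
    moreover have "cmp \<gamma>' (ide s) = \<gamma>'" using idr[of \<gamma>'] ar ge' cdeq by simp
    moreover have "x' \<otimes>\<^bsub>G s\<^esub> k = x" using k_def xS xS' by (simp add: gs.m_assoc[symmetric])
    ultimately show ?thesis using u so by simp
  qed
  show ?thesis
    apply (rule exI[of _ "(ide s, k)"])
    using i1 c1 c2 so cdeq s_def by simp
qed


definition "Pc = {(a,g). a \<in> Rp \<and> g \<in> carrier (G (dm a))}"
definition "Mc = {(a,g). a \<in> Rm \<and> g \<in> carrier (G (dm a))}"

lemma Pc_mem[simp]: "(a,g) \<in> Pc \<longleftrightarrow> a \<in> Rp \<and> g \<in> carrier (G (dm a))" by (simp add: Pc_def)
lemma Mc_mem[simp]: "(a,g) \<in> Mc \<longleftrightarrow> a \<in> Rm \<and> g \<in> carrier (G (dm a))" by (simp add: Mc_def)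

lemma one_car: "r \<in> obj \<Longrightarrow> \<one>\<^bsub>G r\<^esub> \<in> carrier (G r)"
  using grp by (simp add: group.is_monoid monoid.one_closed)

lemma wide_P: "wide_subcat T Pc"
  unfolding wide_subcat_def
proof (intro conjI ballI impI)
  show "Pc \<subseteq> c_arr T" using Rp_arr by (auto simp: Pc_def)
  fix x assume "x \<in> c_obj T" then show "c_id T x \<in> Pc" using Rp_id one_car by simp
next
  fix f g assume f: "f \<in> Pc" and g: "g \<in> Pc" and fg: "c_dom T g = c_cod T f"
  obtain b h where fe: "f = (b,h)" by force
  obtain a x where ge: "g = (a,x)" by force
  have b: "b \<in> Rp" "h \<in> carrier (G (dm b))" using f fe by auto
  have a: "a \<in> Rp" "x \<in> carrier (G (dm a))" using g ge by auto
  have ab: "dm a = cd b" using fg fe ge by simp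
  have xb: "act x b \<in> Rp" using actP b a ab by simp
  have xba: "act x b \<in> arr \<and> dm (act x b) = dm b \<and> cd (act x b) = cd b" using act_arr b a ab Rp_arr by simp
  have cc: "cmp a (act x b) \<in> arr \<and> res b x \<otimes>\<^bsub>G (dm b)\<^esub> h \<in> carrier (G (dm b)) \<and>
         dm (cmp a (act x b)) = dm b \<and> cd (cmp a (act x b)) = cd a"
    using T_comp_arr[of a x b h] a b ab Rp_arr by simp
  have "cmp a (act x b) \<in> Rp" using Rp_comp[OF xb a(1)] xba ab by simp
  then show "c_comp T g f \<in> Pc" using fe ge cc by simp
qed

lemma wide_M: "wide_subcat T Mc"
  unfolding wide_subcat_def
proof (intro conjI ballI impI)
  show "Mc \<subseteq> c_arr T" using Rm_arr by (auto simp: Mc_def)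
  fix x assume "x \<in> c_obj T" then show "c_id T x \<in> Mc" using Rm_id one_car by simp
next
  fix f g assume f: "f \<in> Mc" and g: "g \<in> Mc" and fg: "c_dom T g = c_cod T f"
  obtain b h where fe: "f = (b,h)" by force
  obtain a x where ge: "g = (a,x)" by force
  have b: "b \<in> Rm" "h \<in> carrier (G (dm b))" using f fe by auto
  have a: "a \<in> Rm" "x \<in> carrier (G (dm a))" using g ge by auto
  have ab: "dm a = cd b" using fg fe ge by simp
  have xb: "act x b \<in> Rm" using actM b a ab by simp
  have xba: "act x b \<in> arr \<and> dm (act x b) = dm b \<and> cd (act x b) = cd b" using act_arr b a ab Rm_arr by simp
  have cc: "cmp a (act x b) \<in> arr \<and> res b x \<otimes>\<^bsub>G (dm b)\<^esub> h \<in> carrier (G (dm b)) \<and>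
         dm (cmp a (act x b)) = dm b \<and> cd (cmp a (act x b)) = cd a"
    using T_comp_arr[of a x b h] a b ab Rm_arr by simp
  have "cmp a (act x b) \<in> Rm" using Rm_comp[OF xb a(1)] xba ab by simp
  then show "c_comp T g f \<in> Mc" using fe ge cc by simp
qed

lemma PM_id: "a \<in> Rp \<Longrightarrow> a \<in> Rm \<Longrightarrow> a = ide (dm a)"
  using Rp_deg Rm_deg by fastforce

lemma main_ex: "dualizable_gen_reedy T Pc Mc d"
  unfolding dualizable_gen_reedy_def gen_reedy_def
proof (intro conjI T_cat wide_P wide_M)
  show "\<forall>f\<in>Pc. \<not> cat_iso T f \<longrightarrow> d (c_dom T f) < d (c_cod T f)"
  proof (intro ballI impI)
    fix f assume f: "f \<in> Pc" "\<not> cat_iso T f"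
    obtain a g where fe: "f = (a,g)" by force
    have "a \<noteq> ide (dm a)" using f fe T_iso Rp_arr by auto
    then show "d (c_dom T f) < d (c_cod T f)" using Rp_deg f fe by simp
  qed
  show "\<forall>f\<in>Mc. \<not> cat_iso T f \<longrightarrow> d (c_cod T f) < d (c_dom T f)"
  proof (intro ballI impI)
    fix f assume f: "f \<in> Mc" "\<not> cat_iso T f"
    obtain a g where fe: "f = (a,g)" by force
    have "a \<noteq> ide (dm a)" using f fe T_iso Rm_arr by auto
    then show "d (c_cod T f) < d (c_dom T f)" using Rm_deg f fe by simp
  qed
  show "\<forall>f. cat_iso T f \<longrightarrow> d (c_dom T f) = d (c_cod T f)"
  proof (intro allI impI)
    fix f assume f: "cat_iso T f"
    obtain a g where fe: "f = (a,g)" by force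
    have "a \<in> arr \<and> a = ide (dm a)" using f fe T_iso by auto
    then have "cd a = dm a" by (metis arr_dom cod_id)
    then show "d (c_dom T f) = d (c_cod T f)" using fe by simp
  qed
  show "Pc \<inter> Mc = {f. cat_iso T f}"
  proof (rule equalityI; rule subsetI)
    fix f assume f: "f \<in> Pc \<inter> Mc"
    obtain a g where fe: "f = (a,g)" by force
    then have "a = ide (dm a)" using f PM_id by auto
    then show "f \<in> {f. cat_iso T f}" using f fe T_iso Rp_arr by auto
  next
    fix f assume f: "f \<in> {f. cat_iso T f}"
    obtain a g where fe: "f = (a,g)" by force
    have "a \<in> arr \<and> a = ide (dm a) \<and> g \<in> carrier (G (dm a))" using f fe T_iso by auto
    then show "f \<in> Pc \<inter> Mc" using fe Rp_id Rm_id by (metis IntI Mc_mem Pc_mem arr_dom)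
  qed
  show "\<forall>f\<in>c_arr T. \<exists>g h. g \<in> Pc \<and> h \<in> Mc \<and> c_dom T g = c_cod T h \<and> c_comp T g h = f"
  proof
    fix f assume f: "f \<in> c_arr T"
    obtain a x where fe: "f = (a,x)" by force
    have a: "a \<in> arr" "x \<in> carrier (G (dm a))" using f fe by auto
    obtain m p where mp: "m \<in> Rm" "p \<in> Rp" "dm p = cd m" "cmp p m = a" using fact_ex[OF a(1)] by blast
    have ar: "m \<in> arr" "p \<in> arr" using mp Rm_arr Rp_arr by auto
    have dm: "dm a = dm m" using mp ar by auto
    have "c_comp T (p, \<one>\<^bsub>G (dm p)\<^esub>) (m, x) = (a, x)"
    proof -
      interpret gm: group "G (dm m)" using grp ar by simp
      have "act \<one>\<^bsub>G (cd m)\<^esub> m = m" using act_one ar by simp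
      moreover have "res m \<one>\<^bsub>G (cd m)\<^esub> = \<one>\<^bsub>G (dm m)\<^esub>" using res_one ar by simp
      ultimately show ?thesis using mp a dm by simp
    qed
    moreover have "(p, \<one>\<^bsub>G (dm p)\<^esub>) \<in> Pc" using mp ar one_car by simp
    moreover have "(m, x) \<in> Mc" using mp a dm by simp
    ultimately show "\<exists>g h. g \<in> Pc \<and> h \<in> Mc \<and> c_dom T g = c_cod T h \<and> c_comp T g h = f"
      using fe mp by fastforce
  qed
  show "\<forall>g h g' h'. g \<in> Pc \<longrightarrow> h \<in> Mc \<longrightarrow> g' \<in> Pc \<longrightarrow> h' \<in> Mc \<longrightarrow>
        c_dom T g = c_cod T h \<longrightarrow> c_dom T g' = c_cod T h' \<longrightarrow> c_comp T g h = c_comp T g' h' \<longrightarrow>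
        (\<exists>\<theta>. cat_iso T \<theta> \<and> c_dom T \<theta> = c_cod T h \<and> c_cod T \<theta> = c_cod T h' \<and>
             c_comp T \<theta> h = h' \<and> c_comp T g' \<theta> = g)"
  proof (intro allI impI)
    fix g h g' h' assume H: "g \<in> Pc" "h \<in> Mc" "g' \<in> Pc" "h' \<in> Mc"
      "c_dom T g = c_cod T h" "c_dom T g' = c_cod T h'" "c_comp T g h = c_comp T g' h'"
    obtain a x where ge: "g = (a,x)" by force
    obtain b y where he: "h = (b,y)" by force
    obtain a' x' where ge': "g' = (a',x')" by force
    obtain b' y' where he': "h' = (b',y')" by force
    show "\<exists>\<theta>. cat_iso T \<theta> \<and> c_dom T \<theta> = c_cod T h \<and> c_cod T \<theta> = c_cod T h' \<and>
             c_comp T \<theta> h = h' \<and> c_comp T g' \<theta> = g"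
      using T_uniq[of a x b y a' x' b' y'] H ge he ge' he' by simp
  qed
  show "\<forall>\<theta> f. cat_iso T \<theta> \<longrightarrow> f \<in> Mc \<longrightarrow> c_dom T \<theta> = c_cod T f \<longrightarrow> c_comp T \<theta> f = f \<longrightarrow>
        \<theta> = c_id T (c_dom T \<theta>)"
  proof (intro allI impI)
    fix t f assume H: "cat_iso T t" "f \<in> Mc" "c_dom T t = c_cod T f" "c_comp T t f = f"
    obtain c k where te: "t = (c,k)" by force
    obtain a g where fe: "f = (a,g)" by force
    have c: "c \<in> arr" "c = ide (dm c)" "k \<in> carrier (G (dm c))" using H te T_iso by auto
    have a: "a \<in> Rm" "a \<in> arr" "g \<in> carrier (G (dm a))" using H fe Rm_arr by auto
    have ca: "dm c = cd a" using H te fe by simp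
    have ka: "k \<in> carrier (G (cd a))" using c ca by simp
    have kaa: "act k a \<in> arr \<and> cd (act k a) = cd a" using act_arr a ka by simp
    have e: "cmp c (act k a) = a \<and> res a k \<otimes>\<^bsub>G (dm a)\<^esub> g = g" using H te fe by simp
    have "cmp c (act k a) = act k a" using c ca kaa idl[of "act k a"] by metis
    then have e1: "act k a = a" using e by simp
    interpret ga: group "G (dm a)" using grp a by simp
    have "res a k \<in> carrier (G (dm a))" using res_closed a ka by simp
    then have e2: "res a k = \<one>\<^bsub>G (dm a)\<^esub>" using e a ga.r_cancel_one by blast
    have "k = \<one>\<^bsub>G (cd a)\<^esub>" using compatM[OF a(1) ka e2 e1] .
    then show "t = c_id T (c_dom T t)" using te c ca by simp
  qed
  show "\<forall>\<theta> f. cat_iso T \<theta> \<longrightarrow> f \<in> Pc \<longrightarrow> c_cod T \<theta> = c_dom T f \<longrightarrow> c_comp T f \<theta> = f \<longrightarrow>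
        \<theta> = c_id T (c_dom T \<theta>)"
  proof (intro allI impI)
    fix t f assume H: "cat_iso T t" "f \<in> Pc" "c_cod T t = c_dom T f" "c_comp T f t = f"
    obtain c k where te: "t = (c,k)" by force
    obtain a g where fe: "f = (a,g)" by force
    have c: "c \<in> arr" "c = ide (dm c)" "k \<in> carrier (G (dm c))" using H te T_iso by auto
    have a: "a \<in> Rp" "a \<in> arr" "g \<in> carrier (G (dm a))" using H fe Rp_arr by auto
    have ca: "cd c = dm a" using H te fe by simp
    have dc: "dm c = dm a" using c ca by (metis arr_dom cod_id)
    have e: "res c g \<otimes>\<^bsub>G (dm c)\<^esub> k = g" using H te fe by simp
    have "res c g = g" using res_id c a dc by (metis arr_dom)
    interpret ga: group "G (dm a)" using grp a by simp
    have "k = \<one>\<^bsub>G (dm a)\<^esub>" using e \<open>res c g = g\<close> dc a c ga.l_cancel_one by auto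
    then show "t = c_id T (c_dom T t)" using te c dc by simp
  qed
qed

lemma main_mor: "reedy_morphism R Rp Rm d T Pc Mc d (\<lambda>r. r) (total_embed R G)"
proof -
  have A: "\<forall>f\<in>arr. (f, \<one>\<^bsub>G (dm f)\<^esub>) \<in> c_arr T \<and> c_dom T (f, \<one>\<^bsub>G (dm f)\<^esub>) = dm f \<and> c_cod T (f, \<one>\<^bsub>G (dm f)\<^esub>) = cd f"
    using one_car by simp
  have B: "\<forall>f\<in>arr. \<forall>g\<in>arr. dm g = cd f \<longrightarrow> (cmp g f, \<one>\<^bsub>G (dm (cmp g f))\<^esub>) =
       c_comp T (g, \<one>\<^bsub>G (dm g)\<^esub>) (f, \<one>\<^bsub>G (dm f)\<^esub>)"
  proof (intro ballI impI)
    fix f g assume f: "f \<in> arr" and g: "g \<in> arr" and fg: "dm g = cd f"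
    interpret gf: group "G (dm f)" using grp f by simp
    have "act \<one>\<^bsub>G (cd f)\<^esub> f = f" using act_one f by simp
    moreover have "res f \<one>\<^bsub>G (cd f)\<^esub> = \<one>\<^bsub>G (dm f)\<^esub>" using res_one f by simp
    ultimately show "(cmp g f, \<one>\<^bsub>G (dm (cmp g f))\<^esub>) =
       c_comp T (g, \<one>\<^bsub>G (dm g)\<^esub>) (f, \<one>\<^bsub>G (dm f)\<^esub>)" using f g fg by simp
  qed
  have C: "(\<lambda>a. (a, \<one>\<^bsub>G (dm a)\<^esub>)) ` Rp \<subseteq> Pc" using Rp_arr one_car by auto
  have D: "(\<lambda>a. (a, \<one>\<^bsub>G (dm a)\<^esub>)) ` Rm \<subseteq> Mc" using Rm_arr one_car by auto
  have E: "\<forall>x\<in>obj. (ide x, \<one>\<^bsub>G (dm (ide x))\<^esub>) = c_id T x" by simp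
  show ?thesis
    unfolding reedy_morphism_def is_functor_def total_embed_def
    using A B C D E by (simp only: T_obj) blast
qed

lemma T_idl: "f \<in> c_arr T \<Longrightarrow> c_comp T (c_id T (c_cod T f)) f = f"
  using T_cat unfolding is_category_def by blast
lemma T_idr: "f \<in> c_arr T \<Longrightarrow> c_comp T f (c_id T (c_dom T f)) = f"
  using T_cat unfolding is_category_def by blast

lemma dec1: "a \<in> arr \<Longrightarrow> g \<in> carrier (G (dm a)) \<Longrightarrow> c_comp T (a, \<one>\<^bsub>G (dm a)\<^esub>) (ide (dm a), g) = (a,g)"
proof -
  assume a: "a \<in> arr" "g \<in> carrier (G (dm a))"
  interpret ga: group "G (dm a)" using grp a by simp
  show ?thesis using a act_id res_id one_car by simp
qed

lemma dec2: "m \<in> arr \<Longrightarrow> p \<in> arr \<Longrightarrow> dm p = cd m \<Longrightarrow> g \<in> carrier (G (dm m)) \<Longrightarrow>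
   c_comp T (p, \<one>\<^bsub>G (dm p)\<^esub>) (m, g) = (cmp p m, g)"
proof -
  assume ar: "m \<in> arr" "p \<in> arr" "dm p = cd m" "g \<in> carrier (G (dm m))"
  interpret gm: group "G (dm m)" using grp ar by simp
  have "act \<one>\<^bsub>G (cd m)\<^esub> m = m" using act_one ar by simp
  moreover have "res m \<one>\<^bsub>G (cd m)\<^esub> = \<one>\<^bsub>G (dm m)\<^esub>" using res_one ar by simp
  ultimately show ?thesis using ar by simp
qed

lemma canon:
  assumes D: "dualizable_gen_reedy T P1 M1 d1"
    and F: "reedy_morphism R Rp Rm d T P1 M1 d1 (\<lambda>r. r) (total_embed R G)"
  shows "P1 = Pc \<and> M1 = Mc \<and> (\<forall>r\<in>obj. d1 r = d r)"
proof -
  have GR: "gen_reedy T P1 M1 d1" using D by (simp add: dualizable_gen_reedy_def)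
  have WP: "wide_subcat T P1" and WM: "wide_subcat T M1" using GR by (simp_all add: gen_reedy_def)
  have PMI: "P1 \<inter> M1 = {f. cat_iso T f}" using GR by (simp add: gen_reedy_def)
  have UQ: "\<And>g h g' h'. g \<in> P1 \<Longrightarrow> h \<in> M1 \<Longrightarrow> g' \<in> P1 \<Longrightarrow> h' \<in> M1 \<Longrightarrow>
        c_dom T g = c_cod T h \<Longrightarrow> c_dom T g' = c_cod T h' \<Longrightarrow> c_comp T g h = c_comp T g' h' \<Longrightarrow>
        (\<exists>\<theta>. cat_iso T \<theta> \<and> c_dom T \<theta> = c_cod T h \<and> c_cod T \<theta> = c_cod T h' \<and>
             c_comp T \<theta> h = h' \<and> c_comp T g' \<theta> = g)"
    using GR unfolding gen_reedy_def by blast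
  have EP: "\<And>a. a \<in> Rp \<Longrightarrow> (a, \<one>\<^bsub>G (dm a)\<^esub>) \<in> P1"
    using F unfolding reedy_morphism_def total_embed_def by blast
  have EM: "\<And>a. a \<in> Rm \<Longrightarrow> (a, \<one>\<^bsub>G (dm a)\<^esub>) \<in> M1"
    using F unfolding reedy_morphism_def total_embed_def by blast
  have dd: "\<forall>r\<in>obj. d1 r = d r" using F unfolding reedy_morphism_def by simp
  have P1a: "P1 \<subseteq> c_arr T" and M1a: "M1 \<subseteq> c_arr T" using WP WM by (simp_all add: wide_subcat_def)
  have P1c: "\<And>f g. f \<in> P1 \<Longrightarrow> g \<in> P1 \<Longrightarrow> c_dom T g = c_cod T f \<Longrightarrow> c_comp T g f \<in> P1"
    using WP by (simp add: wide_subcat_def)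
  have M1c: "\<And>f g. f \<in> M1 \<Longrightarrow> g \<in> M1 \<Longrightarrow> c_dom T g = c_cod T f \<Longrightarrow> c_comp T g f \<in> M1"
    using WM by (simp add: wide_subcat_def)
  have P1i: "\<And>x. x \<in> obj \<Longrightarrow> c_id T x \<in> P1" using WP by (simp add: wide_subcat_def)
  have M1i: "\<And>x. x \<in> obj \<Longrightarrow> c_id T x \<in> M1" using WM by (simp add: wide_subcat_def)
  have isoP: "\<And>r g. r \<in> obj \<Longrightarrow> g \<in> carrier (G r) \<Longrightarrow> (ide r, g) \<in> P1"
    using T_iso_bwd PMI by blast
  have isoM: "\<And>r g. r \<in> obj \<Longrightarrow> g \<in> carrier (G r) \<Longrightarrow> (ide r, g) \<in> M1"
    using T_iso_bwd PMI by blast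
  have s1: "Pc \<subseteq> P1"
  proof
    fix f assume f: "f \<in> Pc"
    obtain a g where fe: "f = (a,g)" by force
    have a: "a \<in> Rp" "a \<in> arr" "g \<in> carrier (G (dm a))" using f fe Rp_arr by auto
    have "c_comp T (a, \<one>\<^bsub>G (dm a)\<^esub>) (ide (dm a), g) \<in> P1"
      using P1c[OF isoP EP] a by simp
    then show "f \<in> P1" using dec1 a fe by simp
  qed
  have s2: "Mc \<subseteq> M1"
  proof
    fix f assume f: "f \<in> Mc"
    obtain a g where fe: "f = (a,g)" by force
    have a: "a \<in> Rm" "a \<in> arr" "g \<in> carrier (G (dm a))" using f fe Rm_arr by auto
    have "c_comp T (a, \<one>\<^bsub>G (dm a)\<^esub>) (ide (dm a), g) \<in> M1"
      using M1c[OF isoM EM] a by simp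
    then show "f \<in> M1" using dec1 a fe by simp
  qed
  have s3: "P1 \<subseteq> Pc"
  proof
    fix f assume f: "f \<in> P1"
    obtain a g where fe: "f = (a,g)" by force
    have a: "a \<in> arr" "g \<in> carrier (G (dm a))" using f fe P1a by auto
    obtain m p where mp: "m \<in> Rm" "p \<in> Rp" "dm p = cd m" "cmp p m = a" using fact_ex[OF a(1)] by blast
    have ar: "m \<in> arr" "p \<in> arr" using mp Rm_arr Rp_arr by auto
    have dm: "dm a = dm m" using mp ar by auto
    have mg: "(m,g) \<in> M1" using M1c[OF isoM EM[OF mp(1)], of "dm m" g] a dm ar dec1[of m g] by simp
    have eq: "c_comp T (p, \<one>\<^bsub>G (dm p)\<^esub>) (m,g) = c_comp T f (c_id T (c_dom T f))"
      using dec2[OF ar mp(3)] a dm mp(4) T_idr[of f] f P1a fe by auto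
    obtain t where t: "cat_iso T t" "c_dom T t = c_cod T (c_id T (c_dom T f))"
      "c_comp T t (c_id T (c_dom T f)) = (m,g)"
      using UQ[OF f M1i EP[OF mp(2)] mg _ _ eq[symmetric]] fe a mp(3) by auto
    have "t \<in> c_arr T" using t(1) by (simp add: cat_iso_def)
    then have "c_comp T t (c_id T (c_dom T t)) = t" by (rule T_idr)
    then have "t = (m,g)" using t fe a by simp
    then have mi: "m = ide (dm m)" using t(1) T_iso by simp
    then have "cd m = dm m" using ar(1) by (metis arr_dom cod_id)
    then have "a = p" using mi mp(3,4) idr[OF ar(2)] by simp
    then show "f \<in> Pc" using fe mp a by simp
  qed
  have s4: "M1 \<subseteq> Mc"
  proof
    fix f assume f: "f \<in> M1"
    obtain a g where fe: "f = (a,g)" by force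
    have a: "a \<in> arr" "g \<in> carrier (G (dm a))" using f fe M1a by auto
    obtain m p where mp: "m \<in> Rm" "p \<in> Rp" "dm p = cd m" "cmp p m = a" using fact_ex[OF a(1)] by blast
    have ar: "m \<in> arr" "p \<in> arr" using mp Rm_arr Rp_arr by auto
    have dm: "dm a = dm m" and cda: "cd a = cd p" using mp ar by auto
    have mg: "(m,g) \<in> M1" using M1c[OF isoM EM[OF mp(1)], of "dm m" g] a dm ar dec1[of m g] by simp
    have eq: "c_comp T (p, \<one>\<^bsub>G (dm p)\<^esub>) (m,g) = c_comp T (c_id T (c_cod T f)) f"
      using dec2[OF ar mp(3)] a dm mp(4) T_idl[of f] f M1a fe by auto
    obtain t where t: "cat_iso T t" "c_cod T t = c_cod T f"
      "c_comp T (c_id T (c_cod T f)) t = (p, \<one>\<^bsub>G (dm p)\<^esub>)"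
      using UQ[OF EP[OF mp(2)] mg P1i f _ _ eq] fe a mp(3) by auto
    have "t \<in> c_arr T" using t(1) by (simp add: cat_iso_def)
    then have "c_comp T (c_id T (c_cod T t)) t = t" by (rule T_idl)
    then have "t = (p, \<one>\<^bsub>G (dm p)\<^esub>)" using t by simp
    then have "p = ide (dm p)" using t(1) T_iso by simp
    then have "a = m" using mp(3,4) idl[OF ar(1)] by simp
    then show "f \<in> Mc" using fe mp a by simp
  qed
  show ?thesis using s1 s2 s3 s4 dd by blast
qed

end

theorem proposition2p10:
  fixes R :: "('o, 'm) cat" and Rp Rm :: "'m set" and d :: "'o \<Rightarrow> nat"
    and G :: "'o \<Rightarrow> 'g monoid" and res :: "'m \<Rightarrow> 'g \<Rightarrow> 'g" and act :: "'g \<Rightarrow> 'm \<Rightarrow> 'm"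
  assumes "strict_reedy R Rp Rm d"
    and "crossed_group R G res act"
    and "reedy_compatible R Rp Rm G res act"
  shows "(\<exists>P M d'. dualizable_gen_reedy (total_cat R G res act) P M d' \<and>
            reedy_morphism R Rp Rm d (total_cat R G res act) P M d' (\<lambda>r. r) (total_embed R G))
       \<and> (\<forall>P1 M1 d1 P2 M2 d2.
            dualizable_gen_reedy (total_cat R G res act) P1 M1 d1 \<and>
            reedy_morphism R Rp Rm d (total_cat R G res act) P1 M1 d1 (\<lambda>r. r) (total_embed R G) \<and>
            dualizable_gen_reedy (total_cat R G res act) P2 M2 d2 \<and>
            reedy_morphism R Rp Rm d (total_cat R G res act) P2 M2 d2 (\<lambda>r. r) (total_embed R G)
            \<longrightarrow> P1 = P2 \<and> M1 = M2 \<and> (\<forall>r\<in>c_obj R. d1 r = d2 r))"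
proof -
  interpret RS R Rp Rm d G res act using assms by (unfold_locales) auto
  show ?thesis using main_ex main_mor canon by metis
qed

end
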